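(* Let $k$ be a field, $V$ a $k$-vector space, $N\geq 2$, $R\subseteq V^{\otimes N}$ a subspace, $A=T(V)/(R)$, and $M$ an $A$-bimodule. For any $q\geq p\geq 0$ and any Koszul $p$-cochain $f:W_{\nu(p)}\to A$, the diagram $$\begin{array}{ccc}\mathrm{Hom}_k(M\otimes W_{\nu(q-p)},k)&\xrightarrow{\ [f,-]_{\underset{K}{\frown}}^{\ast}\ }&\mathrm{Hom}_k(M\otimes W_{\nu(q)},k)\\ \downarrow\eta_{q-p}&&\downarrow\eta_q\\ \mathrm{Hom}_k(W_{\nu(q-p)},M^{\ast})&\xrightarrow{\ -[f,-]_{\underset{K}{\smile}}\ }&\mathrm{Hom}_k(W_{\nu(q)},M^{\ast})\end{array}$$ commutes, where $\eta_r(\varphi)(x_1\dots x_{\nu(r)})(m)=\varphi(m\otimes x_1\dots x_{\nu(r)})$.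
   Context: $k$ field, $V$ a $k$-vector space, $N\ge 2$, $R\subseteq V^{\otimes N}$, $A=T(V)/(R)$. $W_0=k$, $W_p=V^{\otimes p}$ ($1\le p\le N-1$), $W_p=\bigcap_{i+N+j=p}V^{\otimes i}\otimes R\otimes V^{\otimes j}$ ($p\ge N$); $\nu(2p')=Np'$, $\nu(2p'+1)=Np'+1$. Elements of $W_p$ are written $x_1\dots x_p$ (a sum of such tensors), sub-blocks being read in the appropriate $W_r$; the $x_i$ act on bimodules via their images in $A$. $M^\ast=\mathrm{Hom}_k(M,k)$ with $(a.u.a')(m)=u(a'ma)$. Cup product of $f:W_{\nu(p)}\to P$, $g:W_{\nu(q)}\to Q$: if $p,q$ not both odd, $(f\underset{K}{\smile}g)(x_1\dots x_{\nu(p+q)})=f(x_1\dots x_{\nu(p)})\otimes_Ag(x_{\nu(p)+1}\dots x_{\nu(p)+\nu(q)})$; if both odd, $(f\underset{K}{\smile}g)(x_1\dots x_{\nu(p+q)})=-\sum_{0\le i+j\le N-2}x_1\dots x_if(x_{i+1}\dots x_{i+\nu(p)})x_{i+\nu(p)+1}\dots x_{\nu(p)+N-j-2}\otimes_Ag(x_{\nu(p)+N-j-1}\dots x_{\nu(p)+\nu(q)+N-j-2})x_{\nu(p)+\nu(q)+N-j-1}\dots x_{\nu(p)+\nu(q)+N-2}$. Cap products of $f:W_{\nu(p)}\to A$ and $z=m\otimes x_1\dots x_{\nu(q)}\in M\otimes W_{\nu(q)}$ (values in $M\otimes W_{\nu(q-p)}$, using $A\otimes_AM\cong M\cong M\otimes_AA$):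 if $p$ and $q-p$ not both odd, $f\underset{K}{\frown}z=f(x_{\nu(q-p)+1}\dots x_{\nu(q)})m\otimes x_1\dots x_{\nu(q-p)}$, $z\underset{K}{\frown}f=(-1)^{pq}mf(x_1\dots x_{\nu(p)})\otimes x_{\nu(p)+1}\dots x_{\nu(q)}$; if $p=2p'+1,q=2q'$: $f\underset{K}{\frown}z=-\sum_{0\le i+j\le N-2}x_{Nq'-Np'-N+i+2}\dots x_{Nq'-Np'-j-1}f(x_{Nq'-Np'-j}\dots x_{Nq'-j})x_{Nq'-j+1}\dots x_{Nq'}mx_1\dots x_i\otimes x_{i+1}\dots x_{i+Nq'-Np'-N+1}$, $z\underset{K}{\frown}f=\sum_{0\le i+j\le N-2}x_{Nq'-j+1}\dots x_{Nq'}mx_1\dots x_if(x_{i+1}\dots x_{Np'+i+1})x_{Np'+i+2}\dots x_{Np'+N-j-1}\otimes x_{Np'+N-j}\dots x_{Nq'-j}$. Brackets (graded commutators): for $f$ of degree $p$ and $z\in M\otimes W_{\nu(q)}$, $[f,z]_{\underset{K}{\frown}}=f\underset{K}{\frown}z-(-1)^{pq}z\underset{K}{\frown}f$; for $g:W_{\nu(r)}\to M^\ast$, $[f,g]_{\underset{K}{\smile}}=f\underset{K}{\smile}g-(-1)^{pr}g\underset{K}{\smile}f$ (identifying $A\otimes_AM^\ast\cong M^\ast\cong M^\ast\otimes_AA$). Transposes are graded: for a linear map $T$ from the degree-$q$ space to the degree-$(q-p)$ space, $T^\ast(\lambda)=(-1)^{p(q-p)}\lambda\circ T$. *)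

theory Defs
  imports Main
begin

text \<open>V is the free k-vector space on a basis type 'b (every vector space has a basis).
  Elements of T(V) are finitely supported functions 'b list => 'k (coefficients of words);
  V^{\<otimes>n} consists of those supported on words of length n.  M \<otimes> V^{\<otimes>n}
  is modelled as finitely supported functions 'b list => 'm supported on words of length n.\<close>

definition nu :: "nat \<Rightarrow> nat \<Rightarrow> nat" where
  "nu N p = (if even p then N * (p div 2) else N * (p div 2) + 1)"

definition sub :: "'b list \<Rightarrow> nat \<Rightarrow> nat \<Rightarrow> 'b list" where
  "sub w s l = take l (drop s w)"

definition wd :: "'b list \<Rightarrow> 'b list \<Rightarrow> 'k::field" where
  "wd u = (\<lambda>w. if w = u then 1 else 0)"

definition tprod :: "('b list \<Rightarrow> 'k::field) \<Rightarrow> ('b list \<Rightarrow> 'k) \<Rightarrow> 'b list \<Rightarrow> 'k" where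
  "tprod x y = (\<lambda>w. \<Sum>k\<le>length w. x (take k w) * y (drop k w))"

definition TV :: "('b list \<Rightarrow> 'k::field) set" where
  "TV = {x. finite {u. x u \<noteq> 0}}"

definition tens :: "nat \<Rightarrow> ('b list \<Rightarrow> 'k::field) set" where
  "tens n = {x \<in> TV. \<forall>u. x u \<noteq> 0 \<longrightarrow> length u = n}"

definition fspan :: "('b list \<Rightarrow> 'k::field) set \<Rightarrow> ('b list \<Rightarrow> 'k) set" where
  "fspan S = {x. \<exists>F c. finite F \<and> F \<subseteq> S \<and> x = (\<lambda>w. \<Sum>s\<in>F. c s * s w)}"

definition sandwich :: "('b list \<Rightarrow> 'k::field) set \<Rightarrow> nat \<Rightarrow> nat \<Rightarrow> ('b list \<Rightarrow> 'k) set" where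
  "sandwich R i j = fspan {tprod (tprod (wd u) r) (wd v) | u r v.
       length u = i \<and> r \<in> R \<and> length v = j}"

definition gen_ideal :: "('b list \<Rightarrow> 'k::field) set \<Rightarrow> ('b list \<Rightarrow> 'k) set" where
  "gen_ideal R = fspan {tprod (tprod (wd u) r) (wd v) | u r v. r \<in> R}"

definition KW :: "nat \<Rightarrow> ('b list \<Rightarrow> 'k::field) set \<Rightarrow> nat \<Rightarrow> ('b list \<Rightarrow> 'k) set" where
  "KW N R p = (if p = 0 then tens 0 else if p < N then tens p
     else {x \<in> tens p. \<forall>i j. i + N + j = p \<longrightarrow> x \<in> sandwich R i j})"

definition subspace_tens :: "nat \<Rightarrow> ('b list \<Rightarrow> 'k::field) set \<Rightarrow> bool" where
  "subspace_tens N R \<longleftrightarrow> R \<subseteq> tens N \<and> (\<lambda>_. 0) \<in> R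
     \<and> (\<forall>x\<in>R. \<forall>y\<in>R. (\<lambda>w. x w + y w) \<in> R)
     \<and> (\<forall>c. \<forall>x\<in>R. (\<lambda>w. c * x w) \<in> R)"

text \<open>pi : T(V) -> A is a surjective unital ring map with kernel (R), i.e. A = T(V)/(R).\<close>
definition presentation :: "('b list \<Rightarrow> 'k::field) set \<Rightarrow> (('b list \<Rightarrow> 'k) \<Rightarrow> 'a::ring_1) \<Rightarrow> bool" where
  "presentation R \<pi> \<longleftrightarrow>
     (\<forall>x\<in>TV. \<forall>y\<in>TV. \<pi> (\<lambda>w. x w + y w) = \<pi> x + \<pi> y)
   \<and> (\<forall>x\<in>TV. \<forall>y\<in>TV. \<pi> (tprod x y) = \<pi> x * \<pi> y)
   \<and> \<pi> (wd []) = 1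
   \<and> \<pi> ` TV = UNIV
   \<and> (\<forall>x\<in>TV. \<pi> x = 0 \<longleftrightarrow> x \<in> gen_ideal R)"

definition kap :: "(('b list \<Rightarrow> 'k::field) \<Rightarrow> 'a::ring_1) \<Rightarrow> 'k \<Rightarrow> 'a" where
  "kap \<pi> c = \<pi> (\<lambda>w. c * wd [] w)"

definition bimodule :: "(('b list \<Rightarrow> 'k::field) \<Rightarrow> 'a::ring_1) \<Rightarrow> ('a \<Rightarrow> 'm::ab_group_add \<Rightarrow> 'm)
     \<Rightarrow> ('m \<Rightarrow> 'a \<Rightarrow> 'm) \<Rightarrow> bool" where
  "bimodule \<pi> lact ract \<longleftrightarrow>
     (\<forall>a b m. lact (a + b) m = lact a m + lact b m)
   \<and> (\<forall>a m n. lact a (m + n) = lact a m + lact a n)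
   \<and> (\<forall>a b m. lact (a * b) m = lact a (lact b m))
   \<and> (\<forall>m. lact 1 m = m)
   \<and> (\<forall>a b m. ract m (a + b) = ract m a + ract m b)
   \<and> (\<forall>a m n. ract (m + n) a = ract m a + ract n a)
   \<and> (\<forall>a b m. ract m (a * b) = ract (ract m a) b)
   \<and> (\<forall>m. ract m 1 = m)
   \<and> (\<forall>a b m. lact a (ract m b) = ract (lact a m) b)
   \<and> (\<forall>c m. lact (kap \<pi> c) m = ract m (kap \<pi> c))"

definition smulM :: "(('b list \<Rightarrow> 'k::field) \<Rightarrow> 'a::ring_1) \<Rightarrow> ('a \<Rightarrow> 'm \<Rightarrow> 'm) \<Rightarrow> 'k \<Rightarrow> 'm \<Rightarrow> 'm" where
  "smulM \<pi> lact c m = lact (kap \<pi> c) m"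

definition signM :: "nat \<Rightarrow> 'm::ab_group_add \<Rightarrow> 'm" where
  "signM e m = (if even e then m else - m)"

definition MT :: "nat \<Rightarrow> ('b list \<Rightarrow> 'm::ab_group_add) set" where
  "MT n = {z. finite {u. z u \<noteq> 0} \<and> (\<forall>u. z u \<noteq> 0 \<longrightarrow> length u = n)}"

definition mtens :: "'m::ab_group_add \<Rightarrow> 'b list \<Rightarrow> 'b list \<Rightarrow> 'm" where
  "mtens m u = (\<lambda>v. if v = u then m else 0)"

definition lin_functional :: "(('b list \<Rightarrow> 'k::field) \<Rightarrow> 'a::ring_1) \<Rightarrow> ('a \<Rightarrow> 'm::ab_group_add \<Rightarrow> 'm)
    \<Rightarrow> nat \<Rightarrow> (('b list \<Rightarrow> 'm) \<Rightarrow> 'k) \<Rightarrow> bool" where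
  "lin_functional \<pi> lact n \<phi> \<longleftrightarrow>
     (\<forall>z\<in>MT n. \<forall>z'\<in>MT n. \<phi> (\<lambda>v. z v + z' v) = \<phi> z + \<phi> z')
   \<and> (\<forall>c. \<forall>z\<in>MT n. \<phi> (\<lambda>v. smulM \<pi> lact c (z v)) = c * \<phi> z)"

text \<open>eta_r(phi)(u)(m) = phi(m \<otimes> u), on words u (extended linearly).\<close>
definition eta :: "(('b list \<Rightarrow> 'm::ab_group_add) \<Rightarrow> 'k) \<Rightarrow> 'b list \<Rightarrow> 'm \<Rightarrow> 'k" where
  "eta \<phi> = (\<lambda>u m. \<phi> (mtens m u))"

text \<open>Cap product f \<frown> (m \<otimes> w) on a basis word w of length nu(q).\<close>
definition cap_l :: "nat \<Rightarrow> (('b list \<Rightarrow> 'k::field) \<Rightarrow> 'a::ring_1) \<Rightarrow> ('a \<Rightarrow> 'm::ab_group_add \<Rightarrow> 'm)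
    \<Rightarrow> ('m \<Rightarrow> 'a \<Rightarrow> 'm) \<Rightarrow> nat \<Rightarrow> nat \<Rightarrow> ('b list \<Rightarrow> 'a) \<Rightarrow> 'm \<Rightarrow> 'b list \<Rightarrow> 'b list \<Rightarrow> 'm" where
  "cap_l N \<pi> lact ract p q f m w =
     (if odd p \<and> odd (q - p) then
        (let p' = p div 2; q' = q div 2; L = N * q'; a = N * q' - N * p' in
         (\<lambda>v. - (\<Sum>(i,j)\<in>{(i,j). i + j \<le> N - 2}.
             mtens (lact (\<pi> (wd (sub w (a - N + i + 1) (N - 2 - i - j)))
                          * f (sub w (a - j - 1) (N * p' + 1))
                          * \<pi> (wd (sub w (L - j) j)))
                         (ract m (\<pi> (wd (sub w 0 i)))))
                   (sub w i (a - N + 1)) v)))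
      else mtens (lact (f (drop (nu N (q - p)) w)) m) (take (nu N (q - p)) w))"

text \<open>Cap product (m \<otimes> w) \<frown> f on a basis word w of length nu(q).\<close>
definition cap_r :: "nat \<Rightarrow> (('b list \<Rightarrow> 'k::field) \<Rightarrow> 'a::ring_1) \<Rightarrow> ('a \<Rightarrow> 'm::ab_group_add \<Rightarrow> 'm)
    \<Rightarrow> ('m \<Rightarrow> 'a \<Rightarrow> 'm) \<Rightarrow> nat \<Rightarrow> nat \<Rightarrow> ('b list \<Rightarrow> 'a) \<Rightarrow> 'm \<Rightarrow> 'b list \<Rightarrow> 'b list \<Rightarrow> 'm" where
  "cap_r N \<pi> lact ract p q f m w =
     (if odd p \<and> odd (q - p) then
        (let p' = p div 2; q' = q div 2; L = N * q'; P = N * p' in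
         (\<lambda>v. \<Sum>(i,j)\<in>{(i,j). i + j \<le> N - 2}.
             mtens (lact (\<pi> (wd (sub w (L - j) j)))
                         (ract m (\<pi> (wd (sub w 0 i)) * f (sub w i (P + 1))
                                  * \<pi> (wd (sub w (P + i + 1) (N - 2 - i - j))))))
                   (sub w (P + N - j - 1) (L - P - N + 1)) v))
      else (\<lambda>v. signM (p * q) (mtens (ract m (f (take (nu N p) w))) (drop (nu N p) w) v)))"

definition cap_bracket :: "nat \<Rightarrow> (('b list \<Rightarrow> 'k::field) \<Rightarrow> 'a::ring_1) \<Rightarrow> ('a \<Rightarrow> 'm::ab_group_add \<Rightarrow> 'm)
    \<Rightarrow> ('m \<Rightarrow> 'a \<Rightarrow> 'm) \<Rightarrow> nat \<Rightarrow> nat \<Rightarrow> ('b list \<Rightarrow> 'a) \<Rightarrow> 'm \<Rightarrow> ('b list \<Rightarrow> 'k) \<Rightarrow> 'b list \<Rightarrow> 'm" where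
  "cap_bracket N \<pi> lact ract p q f m x =
     (\<lambda>v. \<Sum>w\<in>{u. x u \<noteq> 0}. smulM \<pi> lact (x w)
          (cap_l N \<pi> lact ract p q f m w v - signM (p * q) (cap_r N \<pi> lact ract p q f m w v)))"

text \<open>(f \<smile> g)(w)(m) for f of degree p (values in A), g of degree r (values in M^*),
  on a basis word w of length nu(p+r).  (a.u.a')(m) = u(a' m a).\<close>
definition cup_fg :: "nat \<Rightarrow> (('b list \<Rightarrow> 'k::field) \<Rightarrow> 'a::ring_1) \<Rightarrow> ('a \<Rightarrow> 'm \<Rightarrow> 'm)
    \<Rightarrow> ('m \<Rightarrow> 'a \<Rightarrow> 'm) \<Rightarrow> nat \<Rightarrow> nat \<Rightarrow> ('b list \<Rightarrow> 'a) \<Rightarrow> ('b list \<Rightarrow> 'm \<Rightarrow> 'k)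
    \<Rightarrow> 'b list \<Rightarrow> 'm \<Rightarrow> 'k" where
  "cup_fg N \<pi> lact ract p r f g w m =
     (if odd p \<and> odd r then
        (let P = nu N p; Q = nu N r in
         - (\<Sum>(i,j)\<in>{(i,j). i + j \<le> N - 2}.
             g (sub w (P + N - j - 2) Q)
               (lact (\<pi> (wd (sub w (P + Q + N - j - 2) j)))
                     (ract m (\<pi> (wd (sub w 0 i)) * f (sub w i P)
                              * \<pi> (wd (sub w (i + P) (N - 2 - i - j))))))))
      else g (drop (nu N p) w) (ract m (f (take (nu N p) w))))"

text \<open>(g \<smile> f)(w)(m) for g of degree r (values in M^*), f of degree p (values in A).\<close>
definition cup_gf :: "nat \<Rightarrow> (('b list \<Rightarrow> 'k::field) \<Rightarrow> 'a::ring_1) \<Rightarrow> ('a \<Rightarrow> 'm \<Rightarrow> 'm)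
    \<Rightarrow> ('m \<Rightarrow> 'a \<Rightarrow> 'm) \<Rightarrow> nat \<Rightarrow> nat \<Rightarrow> ('b list \<Rightarrow> 'a) \<Rightarrow> ('b list \<Rightarrow> 'm \<Rightarrow> 'k)
    \<Rightarrow> 'b list \<Rightarrow> 'm \<Rightarrow> 'k" where
  "cup_gf N \<pi> lact ract p r f g w m =
     (if odd r \<and> odd p then
        (let P = nu N p; Q = nu N r in
         - (\<Sum>(i,j)\<in>{(i,j). i + j \<le> N - 2}.
             g (sub w i Q)
               (lact (\<pi> (wd (sub w (i + Q) (N - 2 - i - j))) * f (sub w (Q + N - j - 2) P)
                      * \<pi> (wd (sub w (P + Q + N - j - 2) j)))
                     (ract m (\<pi> (wd (sub w 0 i)))))))
      else g (take (nu N r) w) (lact (f (drop (nu N r) w)) m))"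

definition cup_bracket :: "nat \<Rightarrow> (('b list \<Rightarrow> 'k::field) \<Rightarrow> 'a::ring_1) \<Rightarrow> ('a \<Rightarrow> 'm \<Rightarrow> 'm)
    \<Rightarrow> ('m \<Rightarrow> 'a \<Rightarrow> 'm) \<Rightarrow> nat \<Rightarrow> nat \<Rightarrow> ('b list \<Rightarrow> 'a) \<Rightarrow> ('b list \<Rightarrow> 'm \<Rightarrow> 'k)
    \<Rightarrow> ('b list \<Rightarrow> 'k) \<Rightarrow> 'm \<Rightarrow> 'k" where
  "cup_bracket N \<pi> lact ract p r f g x m =
     (\<Sum>w\<in>{u. x u \<noteq> 0}. x w *
        (cup_fg N \<pi> lact ract p r f g w m
         - (-1) ^ (p * r) * cup_gf N \<pi> lact ract p r f g w m))"

end

theory Submission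
  imports Defs
begin


lemma bm_lact_zero: "bimodule \<pi> lact ract \<Longrightarrow> lact a 0 = 0"
  unfolding bimodule_def by (metis add_cancel_right_right)

lemma mt_mtens: "length u = n \<Longrightarrow> mtens m u \<in> MT n"
  unfolding MT_def mtens_def
  by (auto intro: finite_subset[of _ "{u}"])

lemma mt_zero: "(\<lambda>v. 0) \<in> MT n"
  unfolding MT_def by simp

lemma mt_add: "z \<in> MT n \<Longrightarrow> z' \<in> MT n \<Longrightarrow> (\<lambda>v. z v + z' v) \<in> MT n"
  unfolding MT_def
proof (safe)
  assume a: "finite {u. z u \<noteq> 0}" "finite {u. z' u \<noteq> 0}"
  show "finite {u. z u + z' u \<noteq> 0}"
    by (rule finite_subset[of _ "{u. z u \<noteq> 0} \<union> {u. z' u \<noteq> 0}"]) (use a in auto)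
next
  fix u assume "\<forall>u. z u \<noteq> 0 \<longrightarrow> length u = n" "\<forall>u. z' u \<noteq> 0 \<longrightarrow> length u = n" "z u + z' u \<noteq> 0"
  then show "length u = n" by (metis add.right_neutral)
qed

lemma mt_neg: "z \<in> MT n \<Longrightarrow> (\<lambda>v. - z v) \<in> MT n"
  unfolding MT_def by auto

lemma mt_diff: "z \<in> MT n \<Longrightarrow> z' \<in> MT n \<Longrightarrow> (\<lambda>v. z v - z' v) \<in> MT n"
  using mt_add[of z n "\<lambda>v. - z' v"] mt_neg[of z' n] by simp

lemma mt_smul: "bimodule \<pi> lact ract \<Longrightarrow> z \<in> MT n \<Longrightarrow> (\<lambda>v. smulM \<pi> lact c (z v)) \<in> MT n"
  unfolding MT_def smulM_def
proof (safe)
  assume b: "bimodule \<pi> lact ract" and a: "finite {u. z u \<noteq> 0}"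
  show "finite {u. lact (kap \<pi> c) (z u) \<noteq> 0}"
    by (rule finite_subset[of _ "{u. z u \<noteq> 0}"]) (use a bm_lact_zero[OF b] in auto)
next
  fix u assume "bimodule \<pi> lact ract" "\<forall>u. z u \<noteq> 0 \<longrightarrow> length u = n" "lact (kap \<pi> c) (z u) \<noteq> 0"
  then show "length u = n" by (metis bm_lact_zero)
qed

lemma mt_sum: "finite S \<Longrightarrow> (\<forall>s\<in>S. F s \<in> MT n) \<Longrightarrow> (\<lambda>v. \<Sum>s\<in>S. F s v) \<in> MT n"
proof (induction S rule: finite_induct)
  case empty then show ?case by (simp add: mt_zero)
next
  case (insert x T) then show ?case using mt_add[of "F x" n "\<lambda>v. \<Sum>s\<in>T. F s v"] by simp
qed

lemma signM_signM: "signM e (signM e y) = y"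
  unfolding signM_def by simp

lemma signM_even: "even e \<Longrightarrow> signM e y = y"
  unfolding signM_def by simp

context
  fixes \<pi> :: "('b list \<Rightarrow> 'k::field) \<Rightarrow> 'a::ring_1" and lact :: "'a \<Rightarrow> 'm::ab_group_add \<Rightarrow> 'm"
    and n :: nat and \<phi> :: "('b list \<Rightarrow> 'm) \<Rightarrow> 'k"
  assumes lin: "lin_functional \<pi> lact n \<phi>"
begin

lemma L_add: "z \<in> MT n \<Longrightarrow> z' \<in> MT n \<Longrightarrow> \<phi> (\<lambda>v. z v + z' v) = \<phi> z + \<phi> z'"
  using lin unfolding lin_functional_def by blast

lemma L_smul: "z \<in> MT n \<Longrightarrow> \<phi> (\<lambda>v. smulM \<pi> lact c (z v)) = c * \<phi> z"
  using lin unfolding lin_functional_def by blast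

lemma L_zero: "\<phi> (\<lambda>v. 0) = 0"
proof -
  have "\<phi> (\<lambda>v. 0) = \<phi> (\<lambda>v. 0) + \<phi> (\<lambda>v. 0)" using L_add[OF mt_zero mt_zero] by simp
  then show ?thesis by (metis add_cancel_right_right)
qed

lemma L_neg: "z \<in> MT n \<Longrightarrow> \<phi> (\<lambda>v. - z v) = - \<phi> z"
  using L_add[of z "\<lambda>v. - z v"] mt_neg[of z n] L_zero
  by (simp add: eq_neg_iff_add_eq_0 add.commute)

lemma L_diff: "z \<in> MT n \<Longrightarrow> z' \<in> MT n \<Longrightarrow> \<phi> (\<lambda>v. z v - z' v) = \<phi> z - \<phi> z'"
  using L_add[of z "\<lambda>v. - z' v"] mt_neg[of z' n] L_neg[of z'] by simp

lemma L_sum: "finite S \<Longrightarrow> (\<forall>s\<in>S. F s \<in> MT n) \<Longrightarrow> \<phi> (\<lambda>v. \<Sum>s\<in>S. F s v) = (\<Sum>s\<in>S. \<phi> (F s))"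
proof (induction S rule: finite_induct)
  case empty then show ?case by (simp add: L_zero)
next
  case (insert x T)
  then show ?case using L_add[of "F x" "\<lambda>v. \<Sum>s\<in>T. F s v"] mt_sum[of T F n] by simp
qed

lemma L_sum2: "finite S \<Longrightarrow> (\<forall>i j. (i,j)\<in>S \<longrightarrow> (\<lambda>v. F i j v) \<in> MT n) \<Longrightarrow>
   \<phi> (\<lambda>v. \<Sum>(i,j)\<in>S. F i j v) = (\<Sum>(i,j)\<in>S. \<phi> (\<lambda>v. F i j v))"
  using L_sum[of S "\<lambda>s v. F (fst s) (snd s) v"] by (simp add: split_def)

end

lemma mt_sum2: "finite S \<Longrightarrow> (\<forall>i j. (i,j)\<in>S \<longrightarrow> (\<lambda>v. F i j v) \<in> MT n) \<Longrightarrow>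
   (\<lambda>v. \<Sum>(i,j)\<in>S. F i j v) \<in> MT n"
  using mt_sum[of S "\<lambda>s v. F (fst s) (snd s) v"] by (simp add: split_def)

lemma finI: "finite {(i,j). i + j \<le> (K::nat)}"
  by (rule finite_subset[of _ "{..K} \<times> {..K}"]) auto



lemma nu_add: "\<not> (odd a \<and> odd b) \<Longrightarrow> nu N a + nu N b = nu N (a + b)"
  unfolding nu_def apply (auto elim!: evenE oddE simp: algebra_simps) apply presburger+ done

lemma nu_mono: "N \<ge> 1 \<Longrightarrow> a \<le> b \<Longrightarrow> nu N a \<le> nu N b"
proof -
  assume N: "N \<ge> 1" and ab: "a \<le> b"
  have d: "a div 2 \<le> b div 2" using ab by (simp add: div_le_mono)
  show ?thesis
  proof (cases "odd a \<and> even b")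
    case True
    then have "a div 2 < b div 2" using ab by presburger
    then have "N * (a div 2) + 1 \<le> N * (b div 2)"
    proof -
      have "N * (a div 2 + 1) \<le> N * (b div 2)" by (rule mult_le_mono2) (use \<open>a div 2 < b div 2\<close> in simp)
      then show ?thesis using N by (simp add: algebra_simps)
    qed
    then show ?thesis using True unfolding nu_def by simp
  next
    case False
    have h: "N * (a div 2) \<le> N * (b div 2)" using d by simp
    show ?thesis using False unfolding nu_def
      by (cases "even a"; cases "even b") (use h in \<open>auto intro: le_SucI\<close>)
  qed
qed

lemma odd_case:
  fixes \<pi> :: "('b list \<Rightarrow> 'k::field) \<Rightarrow> 'a::ring_1" and lact :: "'a \<Rightarrow> 'm::ab_group_add \<Rightarrow> 'm"
  assumes N2: "N \<ge> 2" and hp: "p = 2*p'+1" and hq: "q = 2*p'+2*r'+2"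
    and lw: "length w = nu N q"
  shows "cap_l N \<pi> lact ract p q f m w = (\<lambda>v. - (\<Sum>(i,j)\<in>{(i,j). i + j \<le> N - 2}.
             mtens (lact (\<pi> (wd (sub w (i + (N*r'+1)) (N - 2 - i - j)))
                          * f (sub w ((N*r'+1) + N - j - 2) (N*p'+1))
                          * \<pi> (wd (sub w ((N*p'+1) + (N*r'+1) + N - j - 2) j)))
                         (ract m (\<pi> (wd (sub w 0 i)))))
                   (sub w i (N*r'+1)) v))"
proof -
  have e: "q - p = 2*r'+1" "p div 2 = p'" "q div 2 = p'+r'+1" using hp hq by auto
  have o: "odd p" "odd (q - p)" using e hp by auto
  have n1: "N*(p'+r'+1) = N*p'+N*r'+N" by (simp add: algebra_simps)
  show ?thesis
    unfolding cap_l_def using o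
    apply (simp add: Let_def e n1)
    apply (rule ext)
    apply (rule arg_cong[where f=uminus])
    apply (rule sum.cong, rule refl)
    apply (clarsimp simp: distrib_left add_ac)
    done
qed

lemma odd_case_r:
  fixes \<pi> :: "('b list \<Rightarrow> 'k::field) \<Rightarrow> 'a::ring_1" and lact :: "'a \<Rightarrow> 'm::ab_group_add \<Rightarrow> 'm"
  assumes N2: "N \<ge> 2" and hp: "p = 2*p'+1" and hq: "q = 2*p'+2*r'+2"
  shows "cap_r N \<pi> lact ract p q f m w = (\<lambda>v. (\<Sum>(i,j)\<in>{(i,j). i + j \<le> N - 2}.
             mtens (lact (\<pi> (wd (sub w ((N*p'+1) + (N*r'+1) + N - j - 2) j)))
                     (ract m (\<pi> (wd (sub w 0 i)) * f (sub w i (N*p'+1))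
                              * \<pi> (wd (sub w (i + (N*p'+1)) (N - 2 - i - j))))))
                   (sub w ((N*p'+1) + N - j - 2) (N*r'+1)) v))"
proof -
  have e: "q - p = 2*r'+1" "p div 2 = p'" "q div 2 = p'+r'+1" using hp hq by auto
  have o: "odd p" "odd (q - p)" using e hp by auto
  have n1: "N*(p'+r'+1) = N*p'+N*r'+N" by (simp add: algebra_simps)
  show ?thesis
    unfolding cap_r_def using o
    apply (simp add: Let_def e n1)
    apply (rule ext)
    apply (rule sum.cong, rule refl)
    apply (clarsimp simp: distrib_left add_ac)
    done
qed

lemma odd_word:
  fixes \<pi> :: "('b list \<Rightarrow> 'k::field) \<Rightarrow> 'a::ring_1" and lact :: "'a \<Rightarrow> 'm::ab_group_add \<Rightarrow> 'm"
  assumes N2: "N \<ge> 2" and hp: "p = 2*p'+1" and hq: "q = 2*p'+2*r'+2"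
    and lw: "length w = nu N q"
    and lin: "lin_functional \<pi> lact (nu N (q - p)) \<phi>"
  shows "(\<lambda>v. cap_l N \<pi> lact ract p q f m w v - signM (p*q) (cap_r N \<pi> lact ract p q f m w v)) \<in> MT (nu N (q - p))
   \<and> (-1) ^ (p*(q-p)) * \<phi> (\<lambda>v. cap_l N \<pi> lact ract p q f m w v - signM (p*q) (cap_r N \<pi> lact ract p q f m w v))
      = - (cup_fg N \<pi> lact ract p (q-p) f (eta \<phi>) w m - (-1) ^ (p*(q-p)) * cup_gf N \<pi> lact ract p (q-p) f (eta \<phi>) w m)"
proof -
  have e: "q - p = 2*r'+1" "p div 2 = p'" "q div 2 = p'+r'+1" using hp hq by auto
  have o: "odd p" "odd (q - p)" using e hp by auto
  have ev: "even (p*q)" using hq by simp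
  have od: "odd (p*(q-p))" using o by simp
  have nq: "nu N (q-p) = N*r'+1" "nu N p = N*p'+1" using e hp unfolding nu_def by auto
  have lw': "length w = N*p'+N*r'+N" using lw hq unfolding nu_def by (simp add: algebra_simps)
  define I where "I = {(i,j). i + j \<le> N - 2}"
  have fI: "finite I" unfolding I_def by (rule finI)
  define CL where "CL = (\<lambda>i j. mtens (lact (\<pi> (wd (sub w (i + (N*r'+1)) (N - 2 - i - j)))
                          * f (sub w ((N*r'+1) + N - j - 2) (N*p'+1))
                          * \<pi> (wd (sub w ((N*p'+1) + (N*r'+1) + N - j - 2) j)))
                         (ract m (\<pi> (wd (sub w 0 i)))))
                   (sub w i (N*r'+1)))"
  define CR where "CR = (\<lambda>i j. mtens (lact (\<pi> (wd (sub w ((N*p'+1) + (N*r'+1) + N - j - 2) j)))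
                     (ract m (\<pi> (wd (sub w 0 i)) * f (sub w i (N*p'+1))
                              * \<pi> (wd (sub w (i + (N*p'+1)) (N - 2 - i - j))))))
                   (sub w ((N*p'+1) + N - j - 2) (N*r'+1)))"
  have cl: "cap_l N \<pi> lact ract p q f m w = (\<lambda>v. - (\<Sum>(i,j)\<in>I. CL i j v))"
    using odd_case[OF N2 hp hq lw] unfolding I_def CL_def by simp
  have cr: "cap_r N \<pi> lact ract p q f m w = (\<lambda>v. (\<Sum>(i,j)\<in>I. CR i j v))"
    using odd_case_r[OF N2 hp hq] unfolding I_def CR_def by simp
  have mCL: "\<forall>i j. (i,j)\<in>I \<longrightarrow> (\<lambda>v. CL i j v) \<in> MT (nu N (q - p))"
    unfolding CL_def I_def nq using N2 lw' by (auto intro!: mt_mtens simp: sub_def)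
  have mCR: "\<forall>i j. (i,j)\<in>I \<longrightarrow> (\<lambda>v. CR i j v) \<in> MT (nu N (q - p))"
    unfolding CR_def I_def nq using N2 lw' by (auto intro!: mt_mtens simp: sub_def)
  have sL: "(\<lambda>v. \<Sum>(i,j)\<in>I. CL i j v) \<in> MT (nu N (q - p))" by (rule mt_sum2[OF fI mCL])
  have sR: "(\<lambda>v. \<Sum>(i,j)\<in>I. CR i j v) \<in> MT (nu N (q - p))" by (rule mt_sum2[OF fI mCR])
  have D: "(\<lambda>v. cap_l N \<pi> lact ract p q f m w v - signM (p*q) (cap_r N \<pi> lact ract p q f m w v))
     = (\<lambda>v. (- (\<Sum>(i,j)\<in>I. CL i j v)) - (\<Sum>(i,j)\<in>I. CR i j v))"
    using ev by (simp add: cl cr signM_even)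
  have mem: "(\<lambda>v. (- (\<Sum>(i,j)\<in>I. CL i j v)) - (\<Sum>(i,j)\<in>I. CR i j v)) \<in> MT (nu N (q - p))"
    using mt_diff[OF mt_neg[OF sL] sR] .
  have phiD: "\<phi> (\<lambda>v. (- (\<Sum>(i,j)\<in>I. CL i j v)) - (\<Sum>(i,j)\<in>I. CR i j v))
      = - (\<Sum>(i,j)\<in>I. \<phi> (\<lambda>v. CL i j v)) - (\<Sum>(i,j)\<in>I. \<phi> (\<lambda>v. CR i j v))"
    using L_diff[OF lin mt_neg[OF sL] sR] L_neg[OF lin sL] L_sum2[OF lin fI mCL] L_sum2[OF lin fI mCR]
    by simp
  have gf: "cup_gf N \<pi> lact ract p (q-p) f (eta \<phi>) w m = - (\<Sum>(i,j)\<in>I. \<phi> (\<lambda>v. CL i j v))"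
    unfolding cup_gf_def using o unfolding Let_def nq eta_def I_def CL_def
    by (simp add: add_ac)
  have fg: "cup_fg N \<pi> lact ract p (q-p) f (eta \<phi>) w m = - (\<Sum>(i,j)\<in>I. \<phi> (\<lambda>v. CR i j v))"
    unfolding cup_fg_def using o unfolding Let_def nq eta_def I_def CR_def
    by (simp add: add_ac)
  show ?thesis
    unfolding D using mem phiD gf fg od by simp
qed



lemma even_word:
  fixes \<pi> :: "('b list \<Rightarrow> 'k::field) \<Rightarrow> 'a::ring_1" and lact :: "'a \<Rightarrow> 'm::ab_group_add \<Rightarrow> 'm"
  assumes N2: "N \<ge> 2" and pq: "p \<le> q" and no: "\<not> (odd p \<and> odd (q - p))"
    and lw: "length w = nu N q"
    and lin: "lin_functional \<pi> lact (nu N (q - p)) \<phi>"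
  shows "(\<lambda>v. cap_l N \<pi> lact ract p q f m w v - signM (p*q) (cap_r N \<pi> lact ract p q f m w v)) \<in> MT (nu N (q - p))
   \<and> (-1) ^ (p*(q-p)) * \<phi> (\<lambda>v. cap_l N \<pi> lact ract p q f m w v - signM (p*q) (cap_r N \<pi> lact ract p q f m w v))
      = - (cup_fg N \<pi> lact ract p (q-p) f (eta \<phi>) w m - (-1) ^ (p*(q-p)) * cup_gf N \<pi> lact ract p (q-p) f (eta \<phi>) w m)"
proof -
  define n where "n = nu N (q - p)"
  define A where "A = lact (f (drop n w)) m"
  define B where "B = ract m (f (take (nu N p) w))"
  define u1 where "u1 = take n w"
  define u2 where "u2 = drop (nu N p) w"
  have no2: "\<not> (odd (q - p) \<and> odd p)" using no by blast
  have ev: "even (p*(q-p))" using no by auto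
  have l1: "length u1 = n" unfolding u1_def n_def using lw nu_mono[of N "q-p" q] N2 by simp
  have add: "nu N p + nu N (q - p) = nu N q" using nu_add[of p "q-p" N] no pq by simp
  have l2: "length u2 = n" unfolding u2_def n_def using lw add by simp
  have m1: "mtens A u1 \<in> MT n" by (rule mt_mtens[OF l1])
  have m2: "mtens B u2 \<in> MT n" by (rule mt_mtens[OF l2])
  have D: "(\<lambda>v. cap_l N \<pi> lact ract p q f m w v - signM (p*q) (cap_r N \<pi> lact ract p q f m w v))
     = (\<lambda>v. mtens A u1 v - mtens B u2 v)"
    unfolding cap_l_def cap_r_def if_not_P[OF no]
    by (simp add: signM_signM A_def B_def u1_def u2_def n_def)
  have mem: "(\<lambda>v. mtens A u1 v - mtens B u2 v) \<in> MT n" using mt_diff[OF m1 m2] .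
  have phiD: "\<phi> (\<lambda>v. mtens A u1 v - mtens B u2 v) = \<phi> (mtens A u1) - \<phi> (mtens B u2)"
    using L_diff[OF lin[folded n_def] m1 m2] .
  have fg: "cup_fg N \<pi> lact ract p (q-p) f (eta \<phi>) w m = \<phi> (mtens B u2)"
    unfolding cup_fg_def eta_def B_def u2_def if_not_P[OF no] by simp
  have gf: "cup_gf N \<pi> lact ract p (q-p) f (eta \<phi>) w m = \<phi> (mtens A u1)"
    using no unfolding cup_gf_def eta_def A_def u1_def n_def if_not_P[OF no2] by simp
  show ?thesis
    unfolding D n_def[symmetric] using mem phiD fg gf ev by simp
qed

lemma word_lemma:
  fixes \<pi> :: "('b list \<Rightarrow> 'k::field) \<Rightarrow> 'a::ring_1" and lact :: "'a \<Rightarrow> 'm::ab_group_add \<Rightarrow> 'm"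
  assumes N2: "N \<ge> 2" and pq: "p \<le> q"
    and lw: "length w = nu N q"
    and lin: "lin_functional \<pi> lact (nu N (q - p)) \<phi>"
  shows "(\<lambda>v. cap_l N \<pi> lact ract p q f m w v - signM (p*q) (cap_r N \<pi> lact ract p q f m w v)) \<in> MT (nu N (q - p))
   \<and> (-1) ^ (p*(q-p)) * \<phi> (\<lambda>v. cap_l N \<pi> lact ract p q f m w v - signM (p*q) (cap_r N \<pi> lact ract p q f m w v))
      = - (cup_fg N \<pi> lact ract p (q-p) f (eta \<phi>) w m - (-1) ^ (p*(q-p)) * cup_gf N \<pi> lact ract p (q-p) f (eta \<phi>) w m)"
proof (cases "odd p \<and> odd (q - p)")
  case True
  then obtain p' r' where hp: "p = 2*p'+1" and hr: "q - p = 2*r'+1" by (meson oddE)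
  have hq: "q = 2*p'+2*r'+2" using hp hr pq by simp
  show ?thesis by (rule odd_word[OF N2 hp hq lw lin])
next
  case False
  show ?thesis by (rule even_word[OF N2 pq False lw lin])
qed



theorem proposition4p3:
  fixes N :: nat
    and R :: "('b list \<Rightarrow> 'k::field) set"
    and \<pi> :: "('b list \<Rightarrow> 'k) \<Rightarrow> 'a::ring_1"
    and lact :: "'a \<Rightarrow> 'm::ab_group_add \<Rightarrow> 'm"
    and ract :: "'m \<Rightarrow> 'a \<Rightarrow> 'm"
    and p q :: nat
    and f :: "'b list \<Rightarrow> 'a"
    and \<phi> :: "('b list \<Rightarrow> 'm) \<Rightarrow> 'k"
  assumes "N \<ge> 2"
    and "subspace_tens N R"
    and "presentation R \<pi>"
    and "bimodule \<pi> lact ract"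
    and "p \<le> q"
    and "lin_functional \<pi> lact (nu N (q - p)) \<phi>"
  shows "\<forall>x\<in>KW N R (nu N q). \<forall>m.
           (-1) ^ (p * (q - p)) * \<phi> (cap_bracket N \<pi> lact ract p q f m x)
         = - cup_bracket N \<pi> lact ract p (q - p) f (eta \<phi>) x m"
proof (intro ballI allI)
  note N2 = assms(1) and bm = assms(4) and pq = assms(5) and lin = assms(6)
  fix x :: "'b list \<Rightarrow> 'k" and m :: 'm
  assume xK: "x \<in> KW N R (nu N q)"
  have xt: "x \<in> tens (nu N q)" using xK unfolding KW_def by (auto split: if_splits)
  define S where "S = {u. x u \<noteq> 0}"
  have fS: "finite S" using xt unfolding S_def tens_def TV_def by simp
  have lS: "\<And>w. w \<in> S \<Longrightarrow> length w = nu N q" using xt unfolding S_def tens_def by simp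
  define D where "D = (\<lambda>w v. cap_l N \<pi> lact ract p q f m w v - signM (p*q) (cap_r N \<pi> lact ract p q f m w v))"
  define s :: 'k where "s = (-1) ^ (p * (q - p))"
  have W: "\<And>w. w \<in> S \<Longrightarrow> D w \<in> MT (nu N (q - p)) \<and> s * \<phi> (D w)
      = - (cup_fg N \<pi> lact ract p (q-p) f (eta \<phi>) w m - s * cup_gf N \<pi> lact ract p (q-p) f (eta \<phi>) w m)"
    unfolding D_def s_def using word_lemma[OF N2 pq lS lin] by simp
  have cb: "cap_bracket N \<pi> lact ract p q f m x = (\<lambda>v. \<Sum>w\<in>S. smulM \<pi> lact (x w) (D w v))"
    unfolding cap_bracket_def S_def D_def ..
  have mem: "\<forall>w\<in>S. (\<lambda>v. smulM \<pi> lact (x w) (D w v)) \<in> MT (nu N (q - p))"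
    using W mt_smul[OF bm] by blast
  have "\<phi> (cap_bracket N \<pi> lact ract p q f m x) = (\<Sum>w\<in>S. \<phi> (\<lambda>v. smulM \<pi> lact (x w) (D w v)))"
    unfolding cb by (rule L_sum[OF lin fS mem])
  also have "\<dots> = (\<Sum>w\<in>S. x w * \<phi> (D w))"
    using W L_smul[OF lin] by (intro sum.cong) auto
  finally have e1: "\<phi> (cap_bracket N \<pi> lact ract p q f m x) = (\<Sum>w\<in>S. x w * \<phi> (D w))" .
  have "s * (\<Sum>w\<in>S. x w * \<phi> (D w)) = (\<Sum>w\<in>S. x w * (s * \<phi> (D w)))"
    by (simp add: sum_distrib_left mult_ac)
  also have "\<dots> = (\<Sum>w\<in>S. x w * (- (cup_fg N \<pi> lact ract p (q-p) f (eta \<phi>) w m - s * cup_gf N \<pi> lact ract p (q-p) f (eta \<phi>) w m)))"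
    using W by (intro sum.cong) auto
  also have "\<dots> = - cup_bracket N \<pi> lact ract p (q - p) f (eta \<phi>) x m"
    unfolding cup_bracket_def S_def[symmetric] s_def by (simp add: sum_negf[symmetric] algebra_simps)
  finally show "(-1) ^ (p * (q - p)) * \<phi> (cap_bracket N \<pi> lact ract p q f m x)
         = - cup_bracket N \<pi> lact ract p (q - p) f (eta \<phi>) x m" using e1 s_def by simp
qed

end
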